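(* Let $\rho$ be a representation of $D^{2,2,2}$ and let $\{i,j,k\}=\{1,2,3\}$. Then: 1. $\varphi_i(\Phi^+\rho(x_i))=0$; 2. $\varphi_i(\Phi^+\rho(x_j))=\varphi_k(\Phi^+\rho(x_j))=\rho(y_iy_k)$; 3. $\varphi_i(\Phi^+\rho(y_i))=\rho(x_i(y_j+y_k))$; 4. $\varphi_i(\Phi^+\rho(y_j))=\rho(y_i(x_j+y_k))$; 5. $\varphi_i(\Phi^+\rho(I))=\rho(y_i(y_j+y_k))$; 6. $\varphi_i(\Phi^+\rho(y_jy_k))=\rho(y_i(x_j+x_k))$.
   Context: $D^{2,2,2}$ is the modular lattice generated by $x_1,y_1,x_2,y_2,x_3,y_3$ subject only to $x_i\subseteq y_i$ ($i=1,2,3$), with a greatest element $I$ adjoined. Meet is written $ab$, join $a+b$. A representation $\rho$ of $D^{2,2,2}$ in a finite-dimensional vector space $X_0$ is a lattice morphism from $D^{2,2,2}$ to the subspace lattice of $X_0$, with $\rho(I)=X_0$. Write $X_i=\rho(x_i)\subseteq Y_i=\rho(y_i)$. Put $R=Y_1\oplus Y_2\oplus Y_3$ and $X^1_0=\{(\eta_1,\eta_2,\eta_3)\in R:\sum\eta_i=0\}$. Let $G'_i\subseteq R$ be the triples whose $i$-th coordinate lies in $X_i$, and let $H'_i\subseteq R$ be the triples whose $i$-th coordinate is $0$. $\Phi^+\rho$ is the representation of $D^{2,2,2}$ in $X^1_0$ with $\Phi^+\rho(y_i)=G'_i\cap X^1_0$, $\Phi^+\rho(x_i)=H'_i\cap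 X^1_0$, $\Phi^+\rho(I)=X^1_0$. The elementary map $\varphi_i:X^1_0\to X_0$ is $(\eta_1,\eta_2,\eta_3)\mapsto\eta_i$; $\varphi_i(S)$ denotes the image of a subspace $S$. *)

theory Defs
  imports Complex_Main
begin

definition ssum :: "'v::ab_group_add set \<Rightarrow> 'v set \<Rightarrow> 'v set" where
  "ssum A B = {a + b | a b. a \<in> A \<and> b \<in> B}"

text \<open>A representation of D^{2,2,2} in the finite-dimensional space X0 (over the field of
  scalars of scale), given by the images X i = rho(x_i), Y i = rho(y_i), i = 1,2,3.
  Since D^{2,2,2} is generated by the x_i, y_i subject only to x_i below y_i (plus the
  adjoined top I with rho(I) = X0), such a lattice morphism is exactly such a choice of subspaces;
  its value on meets/joins of generators is intersection/sum of subspaces.\<close>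
definition rep222 :: "('k::field \<Rightarrow> 'v::ab_group_add \<Rightarrow> 'v) \<Rightarrow> 'v set \<Rightarrow> (nat \<Rightarrow> 'v set) \<Rightarrow> (nat \<Rightarrow> 'v set) \<Rightarrow> bool" where
  "rep222 scale X0 X Y \<longleftrightarrow>
     vector_space scale \<and> module.subspace scale X0 \<and>
     (\<exists>B. finite B \<and> module.span scale B = X0) \<and>
     (\<forall>i\<in>{1,2,3}. module.subspace scale (X i) \<and> module.subspace scale (Y i) \<and>
                    X i \<subseteq> Y i \<and> Y i \<subseteq> X0)"

text \<open>R = Y1 (+) Y2 (+) Y3 is modelled as functions eta :: nat => 'v with eta i in Y i for
  i in {1,2,3} and eta i = 0 otherwise; X^1_0 is the subspace where eta 1 + eta 2 + eta 3 = 0.\<close>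
definition R3 :: "(nat \<Rightarrow> 'v::ab_group_add set) \<Rightarrow> (nat \<Rightarrow> 'v) set" where
  "R3 Y = {\<eta>. (\<forall>i\<in>{1,2,3}. \<eta> i \<in> Y i) \<and> (\<forall>i. i \<notin> {1,2,3} \<longrightarrow> \<eta> i = 0)}"

definition X10 :: "(nat \<Rightarrow> 'v::ab_group_add set) \<Rightarrow> (nat \<Rightarrow> 'v) set" where
  "X10 Y = {\<eta> \<in> R3 Y. \<eta> 1 + \<eta> 2 + \<eta> 3 = 0}"

definition Gp :: "(nat \<Rightarrow> 'v::ab_group_add set) \<Rightarrow> (nat \<Rightarrow> 'v set) \<Rightarrow> nat \<Rightarrow> (nat \<Rightarrow> 'v) set" where
  "Gp X Y i = {\<eta> \<in> R3 Y. \<eta> i \<in> X i}"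

definition Hp :: "(nat \<Rightarrow> 'v::ab_group_add set) \<Rightarrow> nat \<Rightarrow> (nat \<Rightarrow> 'v) set" where
  "Hp Y i = {\<eta> \<in> R3 Y. \<eta> i = 0}"

definition PhiY :: "(nat \<Rightarrow> 'v::ab_group_add set) \<Rightarrow> (nat \<Rightarrow> 'v set) \<Rightarrow> nat \<Rightarrow> (nat \<Rightarrow> 'v) set" where
  "PhiY X Y i = Gp X Y i \<inter> X10 Y"

definition PhiX :: "(nat \<Rightarrow> 'v::ab_group_add set) \<Rightarrow> nat \<Rightarrow> (nat \<Rightarrow> 'v) set" where
  "PhiX Y i = Hp Y i \<inter> X10 Y"

definition PhiI :: "(nat \<Rightarrow> 'v::ab_group_add set) \<Rightarrow> (nat \<Rightarrow> 'v) set" where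
  "PhiI Y = X10 Y"

definition phi :: "nat \<Rightarrow> (nat \<Rightarrow> 'v) set \<Rightarrow> 'v set" where
  "phi i S = (\<lambda>\<eta>. \<eta> i) ` S"

end

theory Submission
  imports Defs
begin

lemma sum3_perm:
  fixes f :: "nat \<Rightarrow> 'v::ab_group_add"
  assumes "{i, j, k} = {1, 2, 3}" "i \<noteq> j" "i \<noteq> k" "j \<noteq> k"
  shows "f 1 + f 2 + f 3 = f i + f j + f k"
proof -
  have "f 1 + f 2 + f 3 = sum f {1,2,3}" by (simp add: ac_simps)
  also have "\<dots> = sum f {i,j,k}" using assms(1) by simp
  also have "\<dots> = f i + f j + f k" using assms(2-4) by (simp add: ac_simps)
  finally show ?thesis .
qed

lemma neg3:
  fixes a b c :: "'v::ab_group_add"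
  assumes "a + b + c = 0" shows "a = - b + - c"
proof -
  have "a = (a + b + c) - b - c" by (simp add: algebra_simps)
  then show ?thesis using assms by simp
qed

lemma ssumI: "a = b + c \<Longrightarrow> b \<in> A \<Longrightarrow> c \<in> B \<Longrightarrow> a \<in> ssum A B"
  unfolding ssum_def by blast

lemma distinct3:
  assumes "{i, j, k} = {1::nat, 2, 3}"
  shows "i \<noteq> j \<and> i \<noteq> k \<and> j \<noteq> k"
proof -
  have "card {i,j,k} = 3" using assms by simp
  then show ?thesis by (auto simp: card_insert_if split: if_splits)
qed

lemma core:
  fixes X Y :: "nat \<Rightarrow> 'v::ab_group_add set" and i j k :: nat
  assumes ijk: "{i, j, k} = {1, 2, 3}"
    and sub: "\<And>n. n \<in> {1,2,3} \<Longrightarrow> 0 \<in> X n \<and> X n \<subseteq> Y n \<and>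
        (\<forall>a\<in>Y n. - a \<in> Y n) \<and> (\<forall>a\<in>X n. - a \<in> X n)"
  shows "(phi i (PhiX Y i) = {0}) \<and>
    (phi i (PhiX Y j) = Y i \<inter> Y k) \<and>
    (phi k (PhiX Y j) = Y i \<inter> Y k) \<and>
    (phi i (PhiY X Y i) = X i \<inter> ssum (Y j) (Y k)) \<and>
    (phi i (PhiY X Y j) = Y i \<inter> ssum (X j) (Y k)) \<and>
    (phi i (PhiI Y) = Y i \<inter> ssum (Y j) (Y k)) \<and>
    (phi i (PhiY X Y j \<inter> PhiY X Y k) = Y i \<inter> ssum (X j) (X k))"
proof -
  have d: "i \<noteq> j" "i \<noteq> k" "j \<noteq> k" using distinct3[OF ijk] by auto
  have mem: "i \<in> {1,2,3}" "j \<in> {1,2,3}" "k \<in> {1,2,3}" using ijk by blast+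
  have S: "\<And>f :: nat \<Rightarrow> 'v. f 1 + f 2 + f 3 = f i + f j + f k"
    using sum3_perm[OF ijk d] by blast
  define mk where "mk = (\<lambda>a b c (n::nat). if n = i then a else if n = j then b else if n = k then c else (0::'v))"
  have mk_i: "mk a b c i = a" and mk_j: "mk a b c j = b" and mk_k: "mk a b c k = c" for a b c
    using d by (auto simp: mk_def)
  have mkX: "mk a b c \<in> X10 Y" if "a \<in> Y i" "b \<in> Y j" "c \<in> Y k" "a + b + c = 0" for a b c
  proof -
    have "\<forall>n\<in>{1,2,3}. mk a b c n \<in> Y n"
    proof
      fix n :: nat assume "n \<in> {1,2,3}"
      then have "n = i \<or> n = j \<or> n = k" using ijk by blast
      then show "mk a b c n \<in> Y n" by (elim disjE) (simp_all add: mk_i mk_j mk_k that)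
    qed
    moreover have "\<forall>n. n \<notin> {1,2,3} \<longrightarrow> mk a b c n = 0"
    proof (intro allI impI)
      fix n :: nat assume "n \<notin> {1,2,3}"
      then have "n \<noteq> i" "n \<noteq> j" "n \<noteq> k" using mem by blast+
      then show "mk a b c n = 0" by (simp add: mk_def)
    qed
    moreover have "mk a b c 1 + mk a b c 2 + mk a b c 3 = 0"
      using S[of "mk a b c"] that by (simp add: mk_i mk_j mk_k)
    ultimately show ?thesis by (simp add: X10_def R3_def)
  qed
  have eX: "\<eta> i \<in> Y i" "\<eta> j \<in> Y j" "\<eta> k \<in> Y k" "\<eta> i + \<eta> j + \<eta> k = 0" if "\<eta> \<in> X10 Y" for \<eta>
  proof -
    have r: "\<forall>n\<in>{1,2,3}. \<eta> n \<in> Y n" "\<eta> 1 + \<eta> 2 + \<eta> 3 = 0" using that unfolding X10_def R3_def by blast+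
    show "\<eta> i \<in> Y i" "\<eta> j \<in> Y j" "\<eta> k \<in> Y k" using r(1) mem by blast+
    show "\<eta> i + \<eta> j + \<eta> k = 0" using r(2) S[of \<eta>] by simp
  qed
  have z: "0 \<in> Y i" "0 \<in> Y j" "0 \<in> Y k" using sub mem by blast+
  have neg: "- a \<in> Y n" if "a \<in> Y n" "n \<in> {i,j,k}" for a n
  proof -
    have "n \<in> {1,2,3}" using that(2) ijk by simp
    then show ?thesis using sub that(1) by blast
  qed
  have negX: "- a \<in> X n" if "a \<in> X n" "n \<in> {i,j,k}" for a n
  proof -
    have "n \<in> {1,2,3}" using that(2) ijk by simp
    then show ?thesis using sub that(1) by blast
  qed
  have XY: "X n \<subseteq> Y n" if "n \<in> {i,j,k}" for n
  proof -
    have "n \<in> {1,2,3}" using that ijk by simp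
    then show ?thesis using sub by blast
  qed
  have nYj: "- a \<in> Y j" if "a \<in> Y j" for a using neg[of a j] that by simp
  have nYk: "- a \<in> Y k" if "a \<in> Y k" for a using neg[of a k] that by simp
  have nYi: "- a \<in> Y i" if "a \<in> Y i" for a using neg[of a i] that by simp
  have nXj: "- a \<in> X j" if "a \<in> X j" for a using negX[of a j] that by simp
  have nXk: "- a \<in> X k" if "a \<in> X k" for a using negX[of a k] that by simp
  have t1: "phi i (PhiX Y i) = {0}"
  proof
    show "phi i (PhiX Y i) \<subseteq> {0}" by (auto simp: phi_def PhiX_def Hp_def)
    have "mk 0 0 0 \<in> PhiX Y i" using mkX[OF z] by (simp add: PhiX_def Hp_def X10_def mk_i)
    then show "{0} \<subseteq> phi i (PhiX Y i)" unfolding phi_def by (metis (no_types) image_eqI mk_i empty_subsetI insert_subset)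
  qed
  have t2: "phi i (PhiX Y j) = Y i \<inter> Y k"
  proof
    show "phi i (PhiX Y j) \<subseteq> Y i \<inter> Y k"
    proof
      fix a assume "a \<in> phi i (PhiX Y j)"
      then obtain \<eta> where h: "\<eta> \<in> X10 Y" "\<eta> j = 0" "a = \<eta> i" by (auto simp: phi_def PhiX_def Hp_def X10_def)
      then have "a = - \<eta> k" using eX[OF h(1)] by (simp add: eq_neg_iff_add_eq_0)
      then show "a \<in> Y i \<inter> Y k" using eX[OF h(1)] neg h by auto
    qed
    show "Y i \<inter> Y k \<subseteq> phi i (PhiX Y j)"
    proof
      fix a assume a: "a \<in> Y i \<inter> Y k"
      have "mk a 0 (-a) \<in> X10 Y" using a z neg by (intro mkX) auto
      then have "mk a 0 (-a) \<in> PhiX Y j" by (simp add: PhiX_def Hp_def X10_def mk_j)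
      then show "a \<in> phi i (PhiX Y j)" unfolding phi_def by (metis (no_types) image_eqI mk_i)
    qed
  qed
  have t3: "phi k (PhiX Y j) = Y i \<inter> Y k"
  proof
    show "phi k (PhiX Y j) \<subseteq> Y i \<inter> Y k"
    proof
      fix a assume "a \<in> phi k (PhiX Y j)"
      then obtain \<eta> where h: "\<eta> \<in> X10 Y" "\<eta> j = 0" "a = \<eta> k" by (auto simp: phi_def PhiX_def Hp_def X10_def)
      then have "a = - \<eta> i" using eX[OF h(1)] by (simp add: add_eq_0_iff2 add.commute)
      then show "a \<in> Y i \<inter> Y k" using eX[OF h(1)] neg h by auto
    qed
    show "Y i \<inter> Y k \<subseteq> phi k (PhiX Y j)"
    proof
      fix a assume a: "a \<in> Y i \<inter> Y k"
      have "mk (-a) 0 a \<in> X10 Y" using a z neg by (intro mkX) auto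
      then have "mk (-a) 0 a \<in> PhiX Y j" by (simp add: PhiX_def Hp_def X10_def mk_j)
      then show "a \<in> phi k (PhiX Y j)" unfolding phi_def by (metis (no_types) image_eqI mk_k)
    qed
  qed
  have t4: "phi i (PhiY X Y i) = X i \<inter> ssum (Y j) (Y k)"
  proof
    show "phi i (PhiY X Y i) \<subseteq> X i \<inter> ssum (Y j) (Y k)"
    proof
      fix a assume "a \<in> phi i (PhiY X Y i)"
      then obtain \<eta> where h: "\<eta> \<in> X10 Y" "\<eta> i \<in> X i" "a = \<eta> i" by (auto simp: phi_def PhiY_def Gp_def X10_def)
      have "a = (- \<eta> j) + (- \<eta> k)" using h neg3[OF eX(4)[OF h(1)]] by simp
      then show "a \<in> X i \<inter> ssum (Y j) (Y k)" using h(2,3) ssumI[OF _ nYj[OF eX(2)[OF h(1)]] nYk[OF eX(3)[OF h(1)]]] by simp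
    qed
    show "X i \<inter> ssum (Y j) (Y k) \<subseteq> phi i (PhiY X Y i)"
    proof
      fix a assume a: "a \<in> X i \<inter> ssum (Y j) (Y k)"
      then obtain b c where bc: "b \<in> Y j" "c \<in> Y k" "a = b + c" by (auto simp: ssum_def)
      have "mk a (-b) (-c) \<in> X10 Y" using a bc XY neg by (intro mkX) auto
      then have "mk a (-b) (-c) \<in> PhiY X Y i" using a by (simp add: PhiY_def Gp_def X10_def mk_i)
      then show "a \<in> phi i (PhiY X Y i)" unfolding phi_def by (metis (no_types) image_eqI mk_i)
    qed
  qed
  have t5: "phi i (PhiY X Y j) = Y i \<inter> ssum (X j) (Y k)"
  proof
    show "phi i (PhiY X Y j) \<subseteq> Y i \<inter> ssum (X j) (Y k)"
    proof
      fix a assume "a \<in> phi i (PhiY X Y j)"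
      then obtain \<eta> where h: "\<eta> \<in> X10 Y" "\<eta> j \<in> X j" "a = \<eta> i" by (auto simp: phi_def PhiY_def Gp_def X10_def)
      have "a = (- \<eta> j) + (- \<eta> k)" using h neg3[OF eX(4)[OF h(1)]] by simp
      then show "a \<in> Y i \<inter> ssum (X j) (Y k)" using h(3) eX(1)[OF h(1)] ssumI[OF _ nXj[OF h(2)] nYk[OF eX(3)[OF h(1)]]] by simp
    qed
    show "Y i \<inter> ssum (X j) (Y k) \<subseteq> phi i (PhiY X Y j)"
    proof
      fix a assume a: "a \<in> Y i \<inter> ssum (X j) (Y k)"
      then obtain b c where bc: "b \<in> X j" "c \<in> Y k" "a = b + c" by (auto simp: ssum_def)
      have "-b \<in> X j" using bc negX by auto
      have "mk a (-b) (-c) \<in> X10 Y" using a bc XY neg \<open>-b \<in> X j\<close> by (intro mkX) auto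
      then have "mk a (-b) (-c) \<in> PhiY X Y j" using \<open>-b \<in> X j\<close> by (simp add: PhiY_def Gp_def X10_def mk_j)
      then show "a \<in> phi i (PhiY X Y j)" unfolding phi_def by (metis (no_types) image_eqI mk_i)
    qed
  qed
  have t6: "phi i (PhiI Y) = Y i \<inter> ssum (Y j) (Y k)"
  proof
    show "phi i (PhiI Y) \<subseteq> Y i \<inter> ssum (Y j) (Y k)"
    proof
      fix a assume "a \<in> phi i (PhiI Y)"
      then obtain \<eta> where h: "\<eta> \<in> X10 Y" "a = \<eta> i" by (auto simp: phi_def PhiI_def)
      have "a = (- \<eta> j) + (- \<eta> k)" using h neg3[OF eX(4)[OF h(1)]] by simp
      then show "a \<in> Y i \<inter> ssum (Y j) (Y k)" using h(2) eX(1)[OF h(1)] ssumI[OF _ nYj[OF eX(2)[OF h(1)]] nYk[OF eX(3)[OF h(1)]]] by simp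
    qed
    show "Y i \<inter> ssum (Y j) (Y k) \<subseteq> phi i (PhiI Y)"
    proof
      fix a assume a: "a \<in> Y i \<inter> ssum (Y j) (Y k)"
      then obtain b c where bc: "b \<in> Y j" "c \<in> Y k" "a = b + c" by (auto simp: ssum_def)
      have "mk a (-b) (-c) \<in> X10 Y" using a bc neg by (intro mkX) auto
      then have "mk a (-b) (-c) \<in> PhiI Y" by (simp add: PhiI_def)
      then show "a \<in> phi i (PhiI Y)" unfolding phi_def by (metis (no_types) image_eqI mk_i)
    qed
  qed
  have t7: "phi i (PhiY X Y j \<inter> PhiY X Y k) = Y i \<inter> ssum (X j) (X k)"
  proof
    show "phi i (PhiY X Y j \<inter> PhiY X Y k) \<subseteq> Y i \<inter> ssum (X j) (X k)"
    proof
      fix a assume "a \<in> phi i (PhiY X Y j \<inter> PhiY X Y k)"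
      then obtain \<eta> where h: "\<eta> \<in> X10 Y" "\<eta> j \<in> X j" "\<eta> k \<in> X k" "a = \<eta> i" by (auto simp: phi_def PhiY_def Gp_def X10_def)
      have "a = (- \<eta> j) + (- \<eta> k)" using h neg3[OF eX(4)[OF h(1)]] by simp
      then show "a \<in> Y i \<inter> ssum (X j) (X k)" using h(4) eX(1)[OF h(1)] ssumI[OF _ nXj[OF h(2)] nXk[OF h(3)]] by simp
    qed
    show "Y i \<inter> ssum (X j) (X k) \<subseteq> phi i (PhiY X Y j \<inter> PhiY X Y k)"
    proof
      fix a assume a: "a \<in> Y i \<inter> ssum (X j) (X k)"
      then obtain b c where bc: "b \<in> X j" "c \<in> X k" "a = b + c" by (auto simp: ssum_def)
      have nb: "-b \<in> X j" "-c \<in> X k" using bc negX by auto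
      have "mk a (-b) (-c) \<in> X10 Y" using a XY nb by (intro mkX) (auto simp: bc)
      then have "mk a (-b) (-c) \<in> PhiY X Y j \<inter> PhiY X Y k" using nb by (simp add: PhiY_def Gp_def X10_def mk_j mk_k)
      then show "a \<in> phi i (PhiY X Y j \<inter> PhiY X Y k)" unfolding phi_def by (metis (no_types) image_eqI mk_i)
    qed
  qed
  show ?thesis using t1 t2 t3 t4 t5 t6 t7 by blast
qed

theorem mainTheorem4:
  fixes scale :: "'k::field \<Rightarrow> 'v::ab_group_add \<Rightarrow> 'v"
    and X0 :: "'v set" and X Y :: "nat \<Rightarrow> 'v set" and i j k :: nat
  assumes "rep222 scale X0 X Y"
    and "{i, j, k} = {1, 2, 3}"
  shows "(phi i (PhiX Y i) = {0}) \<and>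
    (phi i (PhiX Y j) = Y i \<inter> Y k) \<and>
    (phi k (PhiX Y j) = Y i \<inter> Y k) \<and>
    (phi i (PhiY X Y i) = X i \<inter> ssum (Y j) (Y k)) \<and>
    (phi i (PhiY X Y j) = Y i \<inter> ssum (X j) (Y k)) \<and>
    (phi i (PhiI Y) = Y i \<inter> ssum (Y j) (Y k)) \<and>
    (phi i (PhiY X Y j \<inter> PhiY X Y k) = Y i \<inter> ssum (X j) (X k))"
proof (rule core[OF assms(2)])
  fix n :: nat assume n: "n \<in> {1,2,3}"
  have vs: "vector_space scale" using assms(1) by (simp add: rep222_def)
  then interpret vector_space scale .
  have "subspace (X n)" "subspace (Y n)" "X n \<subseteq> Y n" using assms(1) n by (auto simp: rep222_def)
  then show "0 \<in> X n \<and> X n \<subseteq> Y n \<and> (\<forall>a\<in>Y n. - a \<in> Y n) \<and> (\<forall>a\<in>X n. - a \<in> X n)"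
    using subspace_0 subspace_neg by blast
qed

end
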